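(* Let $q=4$, $B=A$, $|A|=m-1$, and put $\theta=2^{4m+2|C|-3}$. Then $\mathcal C_{\overline{\mathcal N}_2}$ is a projective $3$-weight code over $\mathbb F_4$ with parameters $[\theta,\ 2m+|C|,\ \theta/2]$ whose nonzero Hamming weights are $w_1=\theta/2$, $w_2=3\theta/4$, $w_3=\theta$ with frequencies $6$, $4^{2m+|C|}-16$ and $9$, respectively. In particular $w_1+w_2+w_3=\frac{9}{4}\theta$.
   Context: $\mathbb F_4$ is the field with four elements (so $q=4$), $\mathbb F_4^*=\mathbb F_4\setminus\{0\}$, $m\ge2$, $[m]=\{1,\dots,m\}$, $\mathrm{supp}(v)=\{i:v_i\ne0\}$. For nonempty $P\subseteq[m]$, $\Delta_P=\{v\in\mathbb F_q^m:\mathrm{supp}(v)\subseteq P\}$, $\Delta_P^c=\mathbb F_q^m\setminus\Delta_P$. $A,B,C$ are nonempty subsets of $[m]$. Let $\mathcal N_2=\{(w_2+\omega,w_3,w_1)\in\mathbb F_q^{3m}: w_1\in\Delta_A^c,\ w_2\in\Delta_B,\ w_3\in\Delta_C,\ \omega\in\{\mathbf 0,w_1\}\}$ (closed under multiplication by $\mathbb F_q^*$), let $\overline{\mathcal N}_2$ be a set containing exactly one element of each class $\{\alpha x:\alpha\in\mathbb F_q^*\}$, $x\in\mathcal N_2$, and let $\mathcal C_{\overline{\mathcal N}_2}$ be the linear code over $\mathbb F_q$ spanned by the rows of the $3m\times|\overline{\mathcal N}_2|$ matrix whose columns are the elements of $\overline{\mathcal N}_2$. A code is projective if its dual has minimum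 distance at least $3$. *)

theory Defs
  imports Main "HOL.Vector_Spaces" "HOL-Library.Function_Algebras"
begin

definition vecs :: "nat \<Rightarrow> (nat \<Rightarrow> 'a::zero) set" where
  "vecs m = {v. \<forall>i. v i \<noteq> 0 \<longrightarrow> i \<in> {1..m}}"

definition supp :: "(nat \<Rightarrow> 'a::zero) \<Rightarrow> nat set" where
  "supp v = {i. v i \<noteq> 0}"

definition Delta :: "nat \<Rightarrow> nat set \<Rightarrow> (nat \<Rightarrow> 'a::zero) set" where
  "Delta m P = {v \<in> vecs m. supp v \<subseteq> P}"

definition Deltac :: "nat \<Rightarrow> nat set \<Rightarrow> (nat \<Rightarrow> 'a::zero) set" where
  "Deltac m P = vecs m - Delta m P"

type_synonym 'a col = "(nat \<Rightarrow> 'a) \<times> (nat \<Rightarrow> 'a) \<times> (nat \<Rightarrow> 'a)"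

text \<open>Elements of F_q^{3m} written as triples (u,v,w) of vectors of F_q^m.\<close>
definition N2 :: "nat \<Rightarrow> nat set \<Rightarrow> nat set \<Rightarrow> nat set \<Rightarrow> ('a::field) col set" where
  "N2 m A B C = {((\<lambda>i. w2 i + \<omega> i), w3, w1) | w1 w2 w3 \<omega>.
      w1 \<in> Deltac m A \<and> w2 \<in> Delta m B \<and> w3 \<in> Delta m C \<and> \<omega> \<in> {(\<lambda>i. 0), w1}}"

definition smult_col :: "'a::field \<Rightarrow> 'a col \<Rightarrow> 'a col" where
  "smult_col \<alpha> x = (case x of (u, v, w) \<Rightarrow> ((\<lambda>i. \<alpha> * u i), (\<lambda>i. \<alpha> * v i), (\<lambda>i. \<alpha> * w i)))"

definition is_projection_set :: "'a::field col set \<Rightarrow> 'a col set \<Rightarrow> bool" where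
  "is_projection_set N Nbar \<longleftrightarrow>
     (\<forall>y\<in>Nbar. \<exists>x\<in>N. \<exists>\<alpha>. \<alpha> \<noteq> 0 \<and> y = smult_col \<alpha> x) \<and>
     (\<forall>x\<in>N. \<exists>!y. y \<in> Nbar \<and> (\<exists>\<alpha>. \<alpha> \<noteq> 0 \<and> y = smult_col \<alpha> x))"

text \<open>Coordinate j \<in> [3m] of a column: (k,i) with k<3, i \<in> [m].\<close>
definition coord :: "nat \<Rightarrow> nat \<Rightarrow> 'a col \<Rightarrow> 'a" where
  "coord k i x = (case x of (u, v, w) \<Rightarrow> (if k = 0 then u i else if k = 1 then v i else w i))"

text \<open>Words of length |Nbar| are functions on columns, vanishing outside Nbar.\<close>
definition fscale :: "'a::field \<Rightarrow> ('c \<Rightarrow> 'a) \<Rightarrow> ('c \<Rightarrow> 'a)" where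
  "fscale a f = (\<lambda>c. a * f c)"

definition gen_rows :: "nat \<Rightarrow> 'a::field col set \<Rightarrow> ('a col \<Rightarrow> 'a) set" where
  "gen_rows m Nbar = {(\<lambda>c. if c \<in> Nbar then coord k i c else 0) | k i. k < 3 \<and> i \<in> {1..m}}"

definition code_of :: "nat \<Rightarrow> 'a::field col set \<Rightarrow> ('a col \<Rightarrow> 'a) set" where
  "code_of m Nbar = module.span fscale (gen_rows m Nbar)"

definition hweight :: "'c set \<Rightarrow> ('c \<Rightarrow> 'a::zero) \<Rightarrow> nat" where
  "hweight S f = card {c \<in> S. f c \<noteq> 0}"

definition code_dim :: "('c \<Rightarrow> 'a::field) set \<Rightarrow> nat" where
  "code_dim Cd = vector_space.dim fscale Cd"

definition min_dist :: "'c set \<Rightarrow> ('c \<Rightarrow> 'a::zero) set \<Rightarrow> nat" where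
  "min_dist S Cd = Min {hweight S f | f. f \<in> Cd \<and> f \<noteq> 0}"

definition dual_code :: "'c set \<Rightarrow> ('c \<Rightarrow> 'a::field) set \<Rightarrow> ('c \<Rightarrow> 'a) set" where
  "dual_code S Cd = {y. (\<forall>c. c \<notin> S \<longrightarrow> y c = 0) \<and> (\<forall>f\<in>Cd. (\<Sum>c\<in>S. y c * f c) = 0)}"

definition projective :: "'c set \<Rightarrow> ('c \<Rightarrow> 'a::field) set \<Rightarrow> bool" where
  "projective S Cd \<longleftrightarrow> (\<forall>y\<in>dual_code S Cd. y \<noteq> 0 \<longrightarrow> hweight S y \<ge> 3)"

definition weight_freq :: "'c set \<Rightarrow> ('c \<Rightarrow> 'a::zero) set \<Rightarrow> nat \<Rightarrow> nat" where
  "weight_freq S Cd w = card {f \<in> Cd. f \<noteq> 0 \<and> hweight S f = w}"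

end

theory Submission imports Defs "HOL-Library.FuncSet"
begin


lemma fun_sum_apply: "(sum f S) x = (\<Sum>i\<in>S. f i x)"
  by (induction S rule: infinite_finite_induct) auto

lemma vs_fscale: "vector_space (fscale :: 'a::field \<Rightarrow> ('c \<Rightarrow> 'a) \<Rightarrow> _)"
  by unfold_locales (auto simp: fscale_def fun_eq_iff algebra_simps)

lemma bij_zero_supp:
  "bij_betw (\<lambda>f. restrict f S) {f :: 'b \<Rightarrow> 'a::zero. \<forall>x. x \<notin> S \<longrightarrow> f x = 0} (PiE S (\<lambda>_. UNIV))"
proof (rule bij_betw_byWitness[where f' = "\<lambda>g x. if x \<in> S then g x else 0"])
  show "\<forall>a\<in>{f. \<forall>x. x \<notin> S \<longrightarrow> f x = 0}. (\<lambda>x. if x \<in> S then restrict a S x else 0) = a"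
    by (auto simp: fun_eq_iff)
  show "\<forall>a'\<in>PiE S (\<lambda>_. UNIV). restrict (\<lambda>x. if x \<in> S then a' x else 0) S = a'"
    by (auto simp: fun_eq_iff PiE_def extensional_def)
qed auto

lemma card_zero_supp:
  assumes "finite S"
  shows "card {f :: 'b \<Rightarrow> 'a::{zero,finite}. \<forall>x. x \<notin> S \<longrightarrow> f x = 0} = card (UNIV :: 'a set) ^ card S"
    and "finite {f :: 'b \<Rightarrow> 'a::{zero,finite}. \<forall>x. x \<notin> S \<longrightarrow> f x = 0}"
proof -
  have "card (PiE S (\<lambda>_. UNIV :: 'a set)) = card (UNIV :: 'a set) ^ card S"
    by (simp add: card_PiE assms)
  then show "card {f :: 'b \<Rightarrow> 'a::{zero,finite}. \<forall>x. x \<notin> S \<longrightarrow> f x = 0} = card (UNIV :: 'a set) ^ card S"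
    using bij_betw_same_card[OF bij_zero_supp[of S, where 'a='a]] by simp
  show "finite {f :: 'b \<Rightarrow> 'a::{zero,finite}. \<forall>x. x \<notin> S \<longrightarrow> f x = 0}"
    using bij_betw_finite[OF bij_zero_supp[of S, where 'a='a]] assms by (simp add: finite_PiE)
qed

lemma Delta_eq: "P \<subseteq> {1..m} \<Longrightarrow> Delta m P = {v. \<forall>i. i \<notin> P \<longrightarrow> v i = 0}"
  by (auto simp: Delta_def vecs_def supp_def)

lemma card_Delta:
  assumes "P \<subseteq> {1..m}"
  shows "card (Delta m P :: (nat \<Rightarrow> 'a::{zero,finite}) set) = card (UNIV :: 'a set) ^ card P"
    "finite (Delta m P :: (nat \<Rightarrow> 'a::{zero,finite}) set)"
  using card_zero_supp[of P, where 'a='a] finite_subset[OF assms] Delta_eq[OF assms, where 'a='a] by auto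




definition lin :: "nat \<Rightarrow> (nat \<times> nat \<Rightarrow> 'a::field) \<Rightarrow> 'a col \<Rightarrow> 'a" where
  "lin m t x = (\<Sum>p\<in>{..<3::nat} \<times> {1..m}. t p * coord (fst p) (snd p) x)"

definition colmap :: "bool \<times> (nat \<Rightarrow> 'a) \<times> (nat \<Rightarrow> 'a) \<times> (nat \<Rightarrow> 'a) \<Rightarrow> 'a::field col" where
  "colmap p = (case p of (e, w1, w2, w3) \<Rightarrow> ((\<lambda>i. w2 i + (if e then w1 i else 0)), w3, w1))"

lemma smult_col_simp[simp]: "smult_col \<alpha> (u, v, w) = ((\<lambda>i. \<alpha> * u i), (\<lambda>i. \<alpha> * v i), (\<lambda>i. \<alpha> * w i))"
  by (simp add: smult_col_def)

lemma lin_smult: "lin m t (smult_col \<alpha> x) = \<alpha> * lin m t x"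
  by (cases x) (auto simp: lin_def coord_def sum_distrib_left algebra_simps intro!: sum.cong)

locale S13 =
  fixes m :: nat and A C :: "nat set" and Nbar :: "('a::{field,finite}) col set" and j :: nat
  assumes q4: "card (UNIV::'a set) = 4"
  and m2: "m \<ge> 2"
  and A: "A \<subseteq> {1..m}" and C: "C \<subseteq> {1..m}" and Cne: "C \<noteq> {}"
  and j: "{1..m} - A = {j}"
  and Nbar: "is_projection_set (N2 m A A C) Nbar"
begin

abbreviation "P \<equiv> (UNIV :: bool set) \<times> (Deltac m A :: (nat \<Rightarrow> 'a) set) \<times> (Delta m A :: (nat \<Rightarrow> 'a) set) \<times> (Delta m C :: (nat \<Rightarrow> 'a) set)"

abbreviation "NN \<equiv> (N2 m A A C :: 'a col set)"

lemma jm: "j \<in> {1..m}" "j \<notin> A" using j by auto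

lemma Deltac_iff: "w \<in> Deltac m A \<longleftrightarrow> w \<in> vecs m \<and> w j \<noteq> 0"
proof
  assume "w \<in> Deltac m A"
  then have w: "w \<in> vecs m" "\<not> supp w \<subseteq> A" by (auto simp: Deltac_def Delta_def)
  then obtain i where "w i \<noteq> 0" "i \<notin> A" by (auto simp: supp_def)
  moreover with w have "i \<in> {1..m}" by (auto simp: vecs_def)
  ultimately show "w \<in> vecs m \<and> w j \<noteq> 0" using j w by auto
next
  assume "w \<in> vecs m \<and> w j \<noteq> 0"
  then show "w \<in> Deltac m A" using jm by (auto simp: Deltac_def Delta_def supp_def)
qed

lemma DeltaA_j: "w \<in> Delta m A \<Longrightarrow> w j = 0"
  using jm by (auto simp: Delta_def supp_def)

lemma N2_eq: "NN = colmap ` P"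
  unfolding N2_def colmap_def
  apply (rule set_eqI)
  apply (rule iffI)
   apply clarsimp
   apply (erule disjE)
    apply (rule_tac x="(False, w1, w2, w3)" in image_eqI, auto)[1]
   apply (rule_tac x="(True, w1, w2, w3)" in image_eqI, auto)[1]
  apply clarsimp
  subgoal for e w1 w2 w3
    apply (rule_tac x=w2 in exI)
    apply (rule_tac x="if e then w1 else (\<lambda>i. 0)" in exI)
    apply (auto simp: fun_eq_iff)
    done
  done

lemma inj_colmap: "inj_on colmap P"
proof (rule inj_onI)
  fix p q assume p: "p \<in> P" and q: "q \<in> P" and eq: "colmap p = colmap q"
  obtain e w1 w2 w3 where pp: "p = (e, w1, w2, w3)" by (cases p) auto
  obtain e' w1' w2' w3' where qq: "q = (e', w1', w2', w3')" by (cases q) auto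
  have h: "w3 = w3'" "w1 = w1'" "\<And>i. w2 i + (if e then w1 i else 0) = w2' i + (if e' then w1' i else 0)"
    using eq by (auto simp: pp qq colmap_def fun_eq_iff)
  have "w2 j = 0" "w2' j = 0" "w1 j \<noteq> 0" using p q pp qq DeltaA_j Deltac_iff by auto
  then have "e = e'" using h(3)[of j] h(2) by (auto split: if_splits)
  then have "w2 = w2'" using h by (auto simp: fun_eq_iff)
  then show "p = q" using h \<open>e = e'\<close> pp qq by simp
qed

lemma cardA: "card A = m - 1"
proof -
  have fA: "finite A" using A finite_subset by blast
  have "card ({1..m} - A) = card {1..m} - card A" using A fA by (intro card_Diff_subset) auto
  moreover have "card ({1..m} - A) = 1" using j by simp
  moreover have "card A \<le> m" using card_mono[OF _ A] by simp
  ultimately show ?thesis by simp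
qed

lemma card_Deltac: "card (Deltac m A :: (nat \<Rightarrow> 'a) set) = 3 * 4 ^ (m - 1)" "finite (Deltac m A :: (nat \<Rightarrow> 'a) set)"
proof -
  have sub: "(Delta m A :: (nat \<Rightarrow> 'a) set) \<subseteq> Delta m {1..m}" using A by (auto simp: Delta_def)
  have v: "Delta m {1..m} = vecs m" by (auto simp: Delta_def vecs_def supp_def)
  have cA: "card A = m - 1" by (rule cardA)
  have c1: "card (Delta m A :: (nat \<Rightarrow> 'a) set) = 4 ^ (m - 1)"
    using card_Delta(1)[OF A, where 'a='a] q4 cA by simp
  have c2: "card (Delta m {1..m} :: (nat \<Rightarrow> 'a) set) = 4 ^ m"
    using card_Delta(1)[of "{1..m}" m, where 'a='a] q4 by simp
  have "card (Deltac m A :: (nat \<Rightarrow> 'a) set) = 4 ^ m - 4 ^ (m - 1)"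
    unfolding Deltac_def v[symmetric]
    using card_Diff_subset[OF card_Delta(2)[OF A, where 'a='a] sub] c1 c2 by simp
  also have "\<dots> = 3 * 4 ^ (m - 1)" using m2 by (cases m) auto
  finally show "card (Deltac m A :: (nat \<Rightarrow> 'a) set) = 3 * 4 ^ (m - 1)" .
  show "finite (Deltac m A :: (nat \<Rightarrow> 'a) set)" unfolding Deltac_def v[symmetric]
    using card_Delta(2)[of "{1..m}" m] by auto
qed


lemma finite_P: "finite P"
  using card_Deltac(2) card_Delta(2)[OF A] card_Delta(2)[OF C] by (intro finite_cartesian_product) auto

lemma card_P: "card P = 2 * (3 * 4 ^ (m - 1) * 4 ^ (m - 1) * 4 ^ card C)"
  by (simp add: card_cartesian_product card_Deltac card_Delta[OF A] card_Delta[OF C] q4 cardA)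

end



lemma smult_smult: "smult_col \<alpha> (smult_col \<beta> x) = smult_col (\<alpha> * \<beta>) x"
  by (cases x) (simp add: mult.assoc)

lemma smult_one: "smult_col 1 x = x"
  by (cases x) simp

lemma Delta_scale: "w \<in> Delta m S \<Longrightarrow> (\<lambda>i. (\<alpha>::'a::field) * w i) \<in> Delta m S"
  by (auto simp: Delta_def vecs_def supp_def)

context S13
begin

lemma vecs_scale: "w \<in> vecs m \<Longrightarrow> (\<lambda>i. (\<alpha>::'a) * w i) \<in> vecs m"
  by (auto simp: vecs_def)

lemma Deltac_scale: "w \<in> Deltac m A \<Longrightarrow> \<alpha> \<noteq> 0 \<Longrightarrow> (\<lambda>i. (\<alpha>::'a) * w i) \<in> Deltac m A"
  using vecs_scale by (auto simp: Deltac_iff)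

lemma N2_smult: assumes "x \<in> NN" "\<alpha> \<noteq> 0" shows "smult_col \<alpha> x \<in> NN"
proof -
  obtain e w1 w2 w3 where p: "(e, w1, w2, w3) \<in> P" and x: "x = colmap (e, w1, w2, w3)"
    using assms(1) unfolding N2_eq by auto
  have "smult_col \<alpha> x = colmap (e, (\<lambda>i. \<alpha> * w1 i), (\<lambda>i. \<alpha> * w2 i), (\<lambda>i. \<alpha> * w3 i))"
    by (simp add: x colmap_def algebra_simps fun_eq_iff)
  moreover have "(e, (\<lambda>i. \<alpha> * w1 i), (\<lambda>i. \<alpha> * w2 i), (\<lambda>i. \<alpha> * w3 i)) \<in> P"
    using p assms(2) Deltac_scale Delta_scale by auto
  ultimately show ?thesis unfolding N2_eq by blast
qed

lemma N2_third: "x \<in> NN \<Longrightarrow> snd (snd x) j \<noteq> 0"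
  unfolding N2_eq by (auto simp: colmap_def Deltac_iff)

lemma N2_vecs: assumes "x \<in> NN"
  shows "fst x \<in> vecs m" "fst (snd x) \<in> Delta m C" "snd (snd x) \<in> vecs m"
proof -
  obtain e w1 w2 w3 where p: "(e, w1, w2, w3) \<in> P" and x: "x = colmap (e, w1, w2, w3)"
    using assms(1) unfolding N2_eq by auto
  show "fst (snd x) \<in> Delta m C" "snd (snd x) \<in> vecs m" using p x by (auto simp: colmap_def Deltac_iff)
  show "fst x \<in> vecs m" using p x apply (auto simp: colmap_def Deltac_iff Delta_def vecs_def)
    by (metis add.right_neutral)+
qed

lemma smult_inj: assumes "x \<in> NN" "smult_col \<alpha> x = smult_col \<beta> x" shows "\<alpha> = \<beta>"
proof -
  obtain u v w where x: "x = (u, v, w)" by (cases x) auto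
  have "w j \<noteq> 0" using N2_third[OF assms(1)] x by simp
  moreover have "\<alpha> * w j = \<beta> * w j" using assms(2) x by (auto simp: fun_eq_iff)
  ultimately show ?thesis by simp
qed

lemma Nbar1: "y \<in> Nbar \<Longrightarrow> \<exists>x\<in>NN. \<exists>\<alpha>. \<alpha> \<noteq> 0 \<and> y = smult_col \<alpha> x"
  using Nbar unfolding is_projection_set_def by blast

lemma Nbar2: "x \<in> NN \<Longrightarrow> \<exists>!y. y \<in> Nbar \<and> (\<exists>\<alpha>. \<alpha> \<noteq> 0 \<and> y = smult_col \<alpha> x)"
  using Nbar unfolding is_projection_set_def by blast

lemma Nbar_sub: "Nbar \<subseteq> NN"
  using Nbar1 N2_smult by blast

lemma finite_N2: "finite (NN)"
  unfolding N2_eq using finite_P by simp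

lemma finite_Nbar: "finite Nbar"
  using finite_subset[OF Nbar_sub finite_N2] .

lemma Nbar_unique: assumes "y \<in> Nbar" "y' \<in> Nbar" "y' = smult_col \<alpha> y" "\<alpha> \<noteq> 0" shows "y' = y"
proof -
  have yN: "y \<in> NN" using assms(1) Nbar_sub by auto
  have "y = smult_col 1 y" by (simp add: smult_one)
  then show ?thesis using Nbar2[OF yN] assms by (metis one_neq_zero)
qed

lemma card_scale:
  assumes inv: "\<And>x \<alpha>. \<alpha> \<noteq> 0 \<Longrightarrow> Pr (smult_col \<alpha> x) = Pr x"
  shows "card {x \<in> NN. Pr x} = 3 * card {y \<in> Nbar. Pr y}"
proof -
  let ?f = "\<lambda>(\<alpha>, y). smult_col \<alpha> y"
  have "bij_betw ?f ((UNIV - {0::'a}) \<times> {y \<in> Nbar. Pr y}) {x \<in> NN. Pr x}"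
  proof (rule bij_betw_imageI)
    show "inj_on ?f ((UNIV - {0::'a}) \<times> {y \<in> Nbar. Pr y})"
    proof (rule inj_onI)
      fix p q assume p: "p \<in> (UNIV - {0::'a}) \<times> {y \<in> Nbar. Pr y}" and q: "q \<in> (UNIV - {0::'a}) \<times> {y \<in> Nbar. Pr y}"
        and eqf: "?f p = ?f q"
      obtain a y where pp: "p = (a, y)" by (cases p) auto
      obtain b y' where qq: "q = (b, y')" by (cases q) auto
      have a: "a \<noteq> 0" and b: "b \<noteq> 0" and y: "y \<in> Nbar" and y': "y' \<in> Nbar" using p q pp qq by auto
      have eq: "smult_col a y = smult_col b y'" using eqf pp qq by simp
      have "smult_col (inverse b) (smult_col a y) = smult_col (inverse b) (smult_col b y')"
        using eq by simp
      then have "y' = smult_col (inverse b * a) y" using b by (simp add: smult_smult smult_one)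
      then have yy: "y' = y" using Nbar_unique[OF y y'] a b by simp
      then have "a = b" using smult_inj[of y a b] eq y Nbar_sub by auto
      then show "p = q" using yy pp qq by simp
    qed
    show "?f ` ((UNIV - {0::'a}) \<times> {y \<in> Nbar. Pr y}) = {x \<in> NN. Pr x}"
    proof
      show "?f ` ((UNIV - {0::'a}) \<times> {y \<in> Nbar. Pr y}) \<subseteq> {x \<in> NN. Pr x}"
        using N2_smult Nbar_sub inv by auto
      show "{x \<in> NN. Pr x} \<subseteq> ?f ` ((UNIV - {0::'a}) \<times> {y \<in> Nbar. Pr y})"
      proof clarify
        fix x assume x: "x \<in> NN" "Pr x"
        obtain y \<alpha> where y: "y \<in> Nbar" "\<alpha> \<noteq> 0" "y = smult_col \<alpha> x" using Nbar2[OF x(1)] by blast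
        have "x = smult_col (inverse \<alpha>) y" using y by (simp add: smult_smult smult_one)
        moreover have "Pr y" using inv y x by simp
        ultimately show "x \<in> ?f ` ((UNIV - {0::'a}) \<times> {y \<in> Nbar. Pr y})"
          using y by (auto intro!: image_eqI[of _ _ "(inverse \<alpha>, y)"])
      qed
    qed
  qed
  then have "card {x \<in> NN. Pr x} = card ((UNIV - {0::'a}) \<times> {y \<in> Nbar. Pr y})"
    by (simp add: bij_betw_same_card)
  also have "\<dots> = 3 * card {y \<in> Nbar. Pr y}"
    by (simp add: card_cartesian_product q4)
  finally show ?thesis .
qed

end



lemma lin_expand: "lin m t x = (\<Sum>i\<in>{1..m}. t (0, i) * fst x i + t (1, i) * fst (snd x) i + t (2, i) * snd (snd x) i)"
proof -
  have "lin m t x = (\<Sum>k<3. \<Sum>i\<in>{1..m}. t (k, i) * coord k i x)"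
    unfolding lin_def by (simp add: sum.cartesian_product case_prod_beta)
  also have "\<dots> = (\<Sum>i\<in>{1..m}. \<Sum>k<3. t (k, i) * coord k i x)"
    by (rule sum.swap)
  also have "\<dots> = (\<Sum>i\<in>{1..m}. t (0, i) * fst x i + t (1, i) * fst (snd x) i + t (2, i) * snd (snd x) i)"
    by (rule sum.cong) (auto simp: eval_nat_numeral coord_def split: prod.splits)
  finally show ?thesis .
qed

lemma lin_colmap: "lin m t (colmap (e, w1, w2, w3)) =
  (\<Sum>i\<in>{1..m}. t (0, i) * w2 i + t (1, i) * w3 i + (t (2, i) + (if e then t (0, i) else 0)) * w1 i)"
  unfolding lin_expand by (rule sum.cong) (auto simp: colmap_def algebra_simps)

lemma shift_sum:
  assumes "finite I" "i0 \<in> I" "\<And>i. i \<in> I \<Longrightarrow> i \<noteq> i0 \<Longrightarrow> F' i = F i" "F' i0 = F i0 + s"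
  shows "sum F' I = sum F I + (s::'b::comm_ring)"
proof -
  have "sum F' I = F' i0 + sum F' (I - {i0})" using assms by (intro sum.remove) auto
  also have "sum F' (I - {i0}) = sum F (I - {i0})" by (rule sum.cong) (auto simp: assms(3))
  also have "sum F I = F i0 + sum F (I - {i0})" using assms by (intro sum.remove) auto
  ultimately show ?thesis using assms(4) by (simp add: algebra_simps)
qed

lemma uniform_count:
  fixes \<phi> :: "'s \<Rightarrow> 'a::{field,finite}"
  assumes S: "finite S" and q4: "card (UNIV :: 'a set) = 4"
    and into: "\<And>d s. s \<in> S \<Longrightarrow> \<tau> d s \<in> S"
    and shift: "\<And>d s. s \<in> S \<Longrightarrow> \<phi> (\<tau> d s) = \<phi> s + d"
    and inv: "\<And>d s. s \<in> S \<Longrightarrow> \<tau> (- d) (\<tau> d s) = s"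
  shows "4 * card {s \<in> S. \<phi> s \<noteq> 0} = 3 * card S"
proof -
  define k where "k y = card {s \<in> S. \<phi> s = y}" for y
  have ky: "k y = k 0" for y
  proof -
    have "bij_betw (\<tau> y) {s \<in> S. \<phi> s = 0} {s \<in> S. \<phi> s = y}"
    proof (rule bij_betw_byWitness[where f' = "\<tau> (- y)"])
      show "\<forall>a\<in>{s \<in> S. \<phi> s = 0}. \<tau> (- y) (\<tau> y a) = a" using inv by auto
      show "\<forall>a'\<in>{s \<in> S. \<phi> s = y}. \<tau> y (\<tau> (- y) a') = a'" using inv[of _ "- y"] by auto
      show "\<tau> y ` {s \<in> S. \<phi> s = 0} \<subseteq> {s \<in> S. \<phi> s = y}" using into shift by auto
      show "\<tau> (- y) ` {s \<in> S. \<phi> s = y} \<subseteq> {s \<in> S. \<phi> s = 0}" using into shift by auto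
    qed
    then show ?thesis unfolding k_def by (simp add: bij_betw_same_card)
  qed
  have "S = (\<Union>y\<in>UNIV. {s \<in> S. \<phi> s = y})" by auto
  moreover have "card (\<Union>y\<in>UNIV. {s \<in> S. \<phi> s = y}) = (\<Sum>y\<in>UNIV. card {s \<in> S. \<phi> s = y})"
    by (rule card_UN_disjoint) (use S in auto)
  ultimately have "card S = (\<Sum>y\<in>UNIV. k y)" unfolding k_def by simp
  also have "\<dots> = (\<Sum>y\<in>(UNIV::'a set). k 0)" by (rule sum.cong) (auto intro: ky)
  also have "\<dots> = 4 * k 0" using q4 by simp
  finally have cS: "card S = 4 * k 0" .
  have "{s \<in> S. \<phi> s \<noteq> 0} = S - {s \<in> S. \<phi> s = 0}" by auto
  then have "card {s \<in> S. \<phi> s \<noteq> 0} = card S - k 0" unfolding k_def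
    using S by (simp add: card_Diff_subset)
  then show ?thesis using cS by simp
qed




definition Wd :: "nat \<Rightarrow> 'a::field col set \<Rightarrow> (nat \<times> nat \<Rightarrow> 'a) \<Rightarrow> 'a col \<Rightarrow> 'a" where
  "Wd m Nb t = (\<lambda>c. if c \<in> Nb then lin m t c else 0)"

context S13
begin

definition cnt :: "(nat \<times> nat \<Rightarrow> 'a) \<Rightarrow> nat" where
  "cnt t = card {p \<in> P. lin m t (colmap p) \<noteq> 0}"

lemma hweight_cnt: "3 * hweight Nbar (Wd m Nbar t) = cnt t"
proof -
  have "hweight Nbar (Wd m Nbar t) = card {y \<in> Nbar. lin m t y \<noteq> 0}"
    unfolding hweight_def Wd_def by (rule arg_cong[where f=card]) auto
  moreover have "card {x \<in> NN. lin m t x \<noteq> 0} = 3 * card {y \<in> Nbar. lin m t y \<noteq> 0}"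
    by (rule card_scale) (simp add: lin_smult)
  moreover have "{x \<in> NN. lin m t x \<noteq> 0} = colmap ` {p \<in> P. lin m t (colmap p) \<noteq> 0}"
    unfolding N2_eq by auto
  moreover have "card (colmap ` {p \<in> P. lin m t (colmap p) \<noteq> 0}) = cnt t"
    unfolding cnt_def by (rule card_image) (rule inj_on_subset[OF inj_colmap], auto)
  ultimately show ?thesis by simp
qed

lemma Delta_upd: "w \<in> Delta m S \<Longrightarrow> i0 \<in> S \<Longrightarrow> S \<subseteq> {1..m} \<Longrightarrow> w(i0 := x) \<in> Delta m S"
  by (auto simp: Delta_def vecs_def supp_def)

lemma Deltac_upd: "w \<in> Deltac m A \<Longrightarrow> i0 \<in> A \<Longrightarrow> w(i0 := x) \<in> Deltac m A"
  using A jm by (auto simp: Deltac_iff vecs_def)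

lemma case_a:
  assumes i0: "i0 \<in> A" "t (0, i0) \<noteq> 0"
  shows "4 * cnt t = 3 * card P"
  unfolding cnt_def
proof (rule uniform_count[OF finite_P q4, where \<tau> = "\<lambda>d (e, w1, w2, w3). (e, w1, w2(i0 := w2 i0 + d / t (0, i0)), w3)"])
  fix d and s :: "bool \<times> (nat \<Rightarrow> 'a) \<times> (nat \<Rightarrow> 'a) \<times> (nat \<Rightarrow> 'a)"
  assume s: "s \<in> P"
  obtain e w1 w2 w3 where ss: "s = (e, w1, w2, w3)" by (cases s) auto
  show "(case s of (e, w1, w2, w3) \<Rightarrow> (e, w1, w2(i0 := w2 i0 + d / t (0, i0)), w3)) \<in> P"
    using s ss Delta_upd[OF _ i0(1) A] by auto
  show "(case (case s of (e, w1, w2, w3) \<Rightarrow> (e, w1, w2(i0 := w2 i0 + d / t (0, i0)), w3)) of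
          (e, w1, w2, w3) \<Rightarrow> (e, w1, w2(i0 := w2 i0 + - d / t (0, i0)), w3)) = s"
    using ss by (auto simp: fun_eq_iff)
  show "lin m t (colmap (case s of (e, w1, w2, w3) \<Rightarrow> (e, w1, w2(i0 := w2 i0 + d / t (0, i0)), w3)))
     = lin m t (colmap s) + d"
    unfolding ss prod.case lin_colmap using i0 A
    by (intro shift_sum[of "{1..m}" i0]) (auto simp: field_simps)
qed

lemma case_b:
  assumes i0: "i0 \<in> C" "t (1, i0) \<noteq> 0"
  shows "4 * cnt t = 3 * card P"
  unfolding cnt_def
proof (rule uniform_count[OF finite_P q4, where \<tau> = "\<lambda>d (e, w1, w2, w3). (e, w1, w2, w3(i0 := w3 i0 + d / t (1, i0)))"])
  fix d and s :: "bool \<times> (nat \<Rightarrow> 'a) \<times> (nat \<Rightarrow> 'a) \<times> (nat \<Rightarrow> 'a)"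
  assume s: "s \<in> P"
  obtain e w1 w2 w3 where ss: "s = (e, w1, w2, w3)" by (cases s) auto
  show "(case s of (e, w1, w2, w3) \<Rightarrow> (e, w1, w2, w3(i0 := w3 i0 + d / t (1, i0)))) \<in> P"
    using s ss Delta_upd[OF _ i0(1) C] by auto
  show "(case (case s of (e, w1, w2, w3) \<Rightarrow> (e, w1, w2, w3(i0 := w3 i0 + d / t (1, i0)))) of
          (e, w1, w2, w3) \<Rightarrow> (e, w1, w2, w3(i0 := w3 i0 + - d / t (1, i0)))) = s"
    using ss by (auto simp: fun_eq_iff)
  show "lin m t (colmap (case s of (e, w1, w2, w3) \<Rightarrow> (e, w1, w2, w3(i0 := w3 i0 + d / t (1, i0)))))
     = lin m t (colmap s) + d"
    unfolding ss prod.case lin_colmap using i0 C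
    by (intro shift_sum[of "{1..m}" i0]) (auto simp: field_simps)
qed

lemma case_c:
  assumes i0: "i0 \<in> A" "t (2, i0) \<noteq> 0" and z: "\<forall>i\<in>A. t (0, i) = 0"
  shows "4 * cnt t = 3 * card P"
  unfolding cnt_def
proof (rule uniform_count[OF finite_P q4, where \<tau> = "\<lambda>d (e, w1, w2, w3). (e, w1(i0 := w1 i0 + d / t (2, i0)), w2, w3)"])
  fix d and s :: "bool \<times> (nat \<Rightarrow> 'a) \<times> (nat \<Rightarrow> 'a) \<times> (nat \<Rightarrow> 'a)"
  assume s: "s \<in> P"
  obtain e w1 w2 w3 where ss: "s = (e, w1, w2, w3)" by (cases s) auto
  show "(case s of (e, w1, w2, w3) \<Rightarrow> (e, w1(i0 := w1 i0 + d / t (2, i0)), w2, w3)) \<in> P"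
    using s ss Deltac_upd[OF _ i0(1)] by auto
  show "(case (case s of (e, w1, w2, w3) \<Rightarrow> (e, w1(i0 := w1 i0 + d / t (2, i0)), w2, w3)) of
          (e, w1, w2, w3) \<Rightarrow> (e, w1(i0 := w1 i0 + - d / t (2, i0)), w2, w3)) = s"
    using ss by (auto simp: fun_eq_iff)
  show "lin m t (colmap (case s of (e, w1, w2, w3) \<Rightarrow> (e, w1(i0 := w1 i0 + d / t (2, i0)), w2, w3)))
     = lin m t (colmap s) + d"
    unfolding ss prod.case lin_colmap using i0 A z
    by (intro shift_sum[of "{1..m}" i0]) (auto simp: field_simps)
qed

end



context S13
begin

abbreviation "Q \<equiv> (Deltac m A :: (nat \<Rightarrow> 'a) set) \<times> (Delta m A :: (nat \<Rightarrow> 'a) set) \<times> (Delta m C :: (nat \<Rightarrow> 'a) set)"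

definition "R' = (4::nat) ^ (m - 2) * 4 ^ (m - 1) * 4 ^ card C"

lemma R'_pos: "R' > 0" by (simp add: R'_def)

lemma card_Q: "card Q = 12 * R'"
proof -
  have "card Q = 3 * 4 ^ (m - 1) * 4 ^ (m - 1) * 4 ^ card C"
    by (simp add: card_cartesian_product card_Deltac card_Delta[OF A] card_Delta[OF C] q4 cardA)
  moreover have "m - 1 = Suc (m - 2)" using m2 by simp
  then have "(4::nat) ^ (m - 1) = 4 * 4 ^ (m - 2)" by simp
  ultimately show ?thesis unfolding R'_def by simp
qed

lemma card_P': "card P = 24 * R'"
  using card_P card_Q card_Deltac card_Delta[OF A] card_Delta[OF C]
  by (simp add: card_cartesian_product)

lemma finite_Q: "finite Q"
  using card_Deltac(2) card_Delta(2)[OF A] card_Delta(2)[OF C] by (intro finite_cartesian_product) auto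

definition nondeg :: "(nat \<times> nat \<Rightarrow> 'a) \<Rightarrow> bool" where
  "nondeg t \<longleftrightarrow> (\<exists>i\<in>A. t (0, i) \<noteq> 0) \<or> (\<exists>i\<in>C. t (1, i) \<noteq> 0) \<or> (\<exists>i\<in>A. t (2, i) \<noteq> 0)"

lemma cnt_nondeg: "nondeg t \<Longrightarrow> 4 * cnt t = 3 * card P"
  unfolding nondeg_def
proof (elim disjE bexE)
  fix i assume "i \<in> A" "t (0, i) \<noteq> 0" then show ?thesis by (rule case_a)
next
  fix i assume "i \<in> C" "t (1, i) \<noteq> 0" then show ?thesis by (rule case_b)
next
  fix i assume i: "i \<in> A" "t (2, i) \<noteq> 0"
  show ?thesis
  proof (cases "\<forall>i\<in>A. t (0, i) = 0")
    case True then show ?thesis using case_c[of i t] i by simp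
  next
    case False then obtain i' where "i' \<in> A" "t (0, i') \<noteq> 0" by auto
    then show ?thesis by (rule case_a)
  qed
qed

lemma lin_deg:
  assumes nd: "\<not> nondeg t" and p: "(e, w1, w2, w3) \<in> P"
  shows "lin m t (colmap (e, w1, w2, w3)) = (t (2, j) + (if e then t (0, j) else 0)) * w1 j"
proof -
  have "w2 \<in> Delta m A" using p by simp
  then have w2j: "w2 j = 0" by (rule DeltaA_j)
  have w3: "w3 i = 0" if "i \<notin> C" for i using p that by (auto simp: Delta_def supp_def)
  let ?F = "\<lambda>i. t (0, i) * w2 i + t (1, i) * w3 i + (t (2, i) + (if e then t (0, i) else 0)) * w1 i"
  have t1: "t (1, i) * w3 i = 0" for i
  proof (cases "i \<in> C")
    case True then have "t (1, i) = 0" using nd unfolding nondeg_def by blast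
    then show ?thesis by simp
  next
    case False then show ?thesis using w3 by simp
  qed
  have "lin m t (colmap (e, w1, w2, w3)) = ?F j + sum ?F ({1..m} - {j})"
    unfolding lin_colmap by (rule sum.remove) (use jm in auto)
  also have "sum ?F ({1..m} - {j}) = 0"
  proof (rule sum.neutral, rule ballI)
    fix i assume i: "i \<in> {1..m} - {j}"
    then have iA: "i \<in> A" using j by blast
    have "t (0, i) = 0" "t (2, i) = 0" using nd iA unfolding nondeg_def by blast+
    then show "?F i = 0" using t1[of i] by simp
  qed
  finally show ?thesis using w2j t1[of j] by simp
qed

lemma cnt_deg:
  assumes nd: "\<not> nondeg t"
  shows "cnt t = (if t (2, j) \<noteq> 0 then card Q else 0) + (if t (2, j) + t (0, j) \<noteq> 0 then card Q else 0)"
proof -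
  have "{p \<in> P. lin m t (colmap p) \<noteq> 0} =
     {False} \<times> {q \<in> Q. t (2, j) \<noteq> 0} \<union> {True} \<times> {q \<in> Q. t (2, j) + t (0, j) \<noteq> 0}"
  proof (rule set_eqI)
    fix p :: "bool \<times> (nat \<Rightarrow> 'a) \<times> (nat \<Rightarrow> 'a) \<times> (nat \<Rightarrow> 'a)"
    obtain e w1 w2 w3 where pp: "p = (e, w1, w2, w3)" by (cases p) auto
    show "p \<in> {p \<in> P. lin m t (colmap p) \<noteq> 0} \<longleftrightarrow>
      p \<in> {False} \<times> {q \<in> Q. t (2, j) \<noteq> 0} \<union> {True} \<times> {q \<in> Q. t (2, j) + t (0, j) \<noteq> 0}"
    proof (cases "p \<in> P")
      case True
      then have "w1 j \<noteq> 0" using pp Deltac_iff by auto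
      then show ?thesis using True lin_deg[OF nd True[unfolded pp]] pp by (auto simp: add.commute)
    next
      case False then show ?thesis using pp by auto
    qed
  qed
  moreover have "card ({False} \<times> {q \<in> Q. t (2, j) \<noteq> 0} \<union> {True} \<times> {q \<in> Q. t (2, j) + t (0, j) \<noteq> 0})
      = card ({False} \<times> {q \<in> Q. t (2, j) \<noteq> 0}) + card ({True} \<times> {q \<in> Q. t (2, j) + t (0, j) \<noteq> 0})"
    by (rule card_Un_disjoint) (use finite_Q in auto)
  ultimately show ?thesis unfolding cnt_def by (simp add: card_cartesian_product)
qed

abbreviation "hw t \<equiv> hweight Nbar (Wd m Nbar t)"

lemma hw_nondeg: "nondeg t \<Longrightarrow> hw t = 6 * R'"
  using cnt_nondeg[of t] hweight_cnt[of t] card_P' by simp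

lemma hw_deg: "\<not> nondeg t \<Longrightarrow> hw t = 4 * R' * ((if t (2, j) \<noteq> 0 then 1 else 0) + (if t (2, j) + t (0, j) \<noteq> 0 then 1 else 0))"
  using cnt_deg[of t] hweight_cnt[of t] card_Q by auto

end



lemma mod_fscale: "module (fscale :: 'a::field \<Rightarrow> ('c \<Rightarrow> 'a) \<Rightarrow> _)"
  using vs_fscale module_iff_vector_space by blast

definition row :: "'a col set \<Rightarrow> nat \<times> nat \<Rightarrow> 'a::field col \<Rightarrow> 'a" where
  "row Nb p = (\<lambda>c. if c \<in> Nb then coord (fst p) (snd p) c else 0)"

lemma Wd_sum: "Wd m Nb t = (\<Sum>p\<in>{..<3} \<times> {1..m}. fscale (t p) (row Nb p))"
  by (auto simp: fun_eq_iff fun_sum_apply fscale_def Wd_def row_def lin_def)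

lemma Wd_add: "Wd m Nb (\<lambda>p. t p + t' p) = Wd m Nb t + Wd m Nb t'"
  by (auto simp: fun_eq_iff Wd_def lin_def sum.distrib algebra_simps)

lemma Wd_diff: "Wd m Nb (\<lambda>p. t p - t' p) = Wd m Nb t - Wd m Nb t'"
  by (auto simp: fun_eq_iff Wd_def lin_def sum_subtractf algebra_simps)

lemma Wd_scale: "Wd m Nb (\<lambda>p. a * t p) = fscale a (Wd m Nb t)"
  by (auto simp: fun_eq_iff Wd_def lin_def fscale_def sum_distrib_left algebra_simps)

lemma Wd_zero: "Wd m Nb (\<lambda>p. 0) = 0"
  by (auto simp: fun_eq_iff Wd_def lin_def)

lemma row_Wd: assumes "p \<in> {..<3} \<times> {1..m}" shows "row Nb p = Wd m Nb (\<lambda>q. if q = p then 1 else 0)"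
proof -
  have "Wd m Nb (\<lambda>q. if q = p then 1 else 0) = (\<Sum>q\<in>{..<3} \<times> {1..m}. if q = p then row Nb q else 0)"
    unfolding Wd_sum by (rule sum.cong) (auto simp: fscale_def fun_eq_iff)
  also have "\<dots> = row Nb p" using assms by (simp add: sum.delta')
  finally show ?thesis by simp
qed

context S13
begin

abbreviation "TT \<equiv> {0::nat} \<times> {1..m} \<union> {1} \<times> C \<union> {2} \<times> {1..m}"

abbreviation "Tset \<equiv> {t :: nat \<times> nat \<Rightarrow> 'a. \<forall>p. p \<notin> TT \<longrightarrow> t p = 0}"

definition mk :: "'a \<Rightarrow> 'a \<Rightarrow> nat \<times> nat \<Rightarrow> 'a" where
  "mk a c = (\<lambda>p. if p = (0, j) then a else if p = (2, j) then c else 0)"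

lemma TT_sub: "TT \<subseteq> {..<3} \<times> {1..m}" using C by auto

lemma Wd_trunc: "Wd m Nbar t = Wd m Nbar (\<lambda>p. if p \<in> TT then t p else 0)"
proof (rule ext)
  fix c show "Wd m Nbar t c = Wd m Nbar (\<lambda>p. if p \<in> TT then t p else 0) c"
  proof (cases "c \<in> Nbar")
    case True
    then have cN: "c \<in> NN" using Nbar_sub by auto
    have v: "fst (snd c) i = 0" if "i \<notin> C" for i
      using N2_vecs(2)[OF cN] that by (auto simp: Delta_def supp_def)
    show ?thesis using True unfolding Wd_def lin_expand
      by (auto intro!: sum.cong simp: v)
  qed (simp add: Wd_def)
qed

lemma code_eq: "code_of m Nbar = Wd m Nbar ` Tset"
proof
  have sub: "module.subspace fscale (range (Wd m Nbar))"
    unfolding module.subspace_def[OF mod_fscale]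
  proof (intro conjI ballI allI)
    show "0 \<in> range (Wd m Nbar)" using Wd_zero by (metis rangeI)
  next
    fix x y assume "x \<in> range (Wd m Nbar)" "y \<in> range (Wd m Nbar)"
    then obtain t t' where "x = Wd m Nbar t" "y = Wd m Nbar t'" by auto
    then show "x + y \<in> range (Wd m Nbar)" using Wd_add[of m Nbar t t'] by (metis rangeI)
  next
    fix c x assume "x \<in> range (Wd m Nbar)"
    then obtain t where "x = Wd m Nbar t" by auto
    then show "fscale c x \<in> range (Wd m Nbar)" using Wd_scale[of m Nbar c t] by (metis rangeI)
  qed
  have "gen_rows m Nbar \<subseteq> range (Wd m Nbar)"
  proof
    fix g assume "g \<in> gen_rows m Nbar"
    then obtain k i where ki: "k < 3" "i \<in> {1..m}" "g = (\<lambda>c. if c \<in> Nbar then coord k i c else 0)"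
      unfolding gen_rows_def by auto
    have "g = row Nbar (k, i)" unfolding ki(3) row_def fst_conv snd_conv by (rule refl)
    also have "\<dots> = Wd m Nbar (\<lambda>q. if q = (k, i) then 1 else 0)" using ki by (intro row_Wd) auto
    finally show "g \<in> range (Wd m Nbar)" by simp
  qed
  then have "code_of m Nbar \<subseteq> range (Wd m Nbar)"
    unfolding code_of_def by (rule module.span_minimal[OF mod_fscale _ sub])
  also have "range (Wd m Nbar) \<subseteq> Wd m Nbar ` Tset"
  proof clarify
    fix t show "Wd m Nbar t \<in> Wd m Nbar ` Tset"
      by (subst Wd_trunc) (rule imageI, auto)
  qed
  finally show "code_of m Nbar \<subseteq> Wd m Nbar ` Tset" .
next
  show "Wd m Nbar ` Tset \<subseteq> code_of m Nbar"
  proof clarify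
    fix t :: "nat \<times> nat \<Rightarrow> 'a"
    have "row Nbar p \<in> gen_rows m Nbar" if "p \<in> {..<3} \<times> {1..m}" for p
    proof -
      obtain k i where pp: "p = (k, i)" by (cases p)
      have "row Nbar p = (\<lambda>c. if c \<in> Nbar then coord k i c else 0)"
        unfolding pp row_def fst_conv snd_conv by (rule refl)
      then show ?thesis using that pp unfolding gen_rows_def by blast
    qed
    then show "Wd m Nbar t \<in> code_of m Nbar"
      unfolding Wd_sum code_of_def
      by (intro module.span_sum[OF mod_fscale] module.span_scale[OF mod_fscale] module.span_base[OF mod_fscale]) auto
  qed
qed

lemma deg_mk: assumes "t \<in> Tset" "\<not> nondeg t" shows "t = mk (t (0, j)) (t (2, j))"
proof
  fix p :: "nat \<times> nat"
  obtain k i where pp: "p = (k, i)" by (cases p) auto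
  show "t p = mk (t (0, j)) (t (2, j)) p"
  proof (cases "p \<in> TT")
    case False
    then have "t p = 0" using assms(1) by blast
    moreover have "p \<noteq> (0, j)" "p \<noteq> (2, j)" using False jm by auto
    ultimately show ?thesis by (simp add: mk_def)
  next
    case True
    then show ?thesis using assms(2) j pp unfolding nondeg_def mk_def by auto
  qed
qed

lemma mk_Tset: "mk a c \<in> Tset" using jm by (auto simp: mk_def)

lemma mk_deg: "\<not> nondeg (mk a c)" using jm by (auto simp: mk_def nondeg_def)

lemma mk_apply: "mk a c (0, j) = a" "mk a c (2, j) = c" by (auto simp: mk_def)

lemma mk_zero: "mk 0 0 = (\<lambda>p. 0)" by (auto simp: mk_def)

lemma deg_zero: assumes "t \<in> Tset" "\<not> nondeg t" "t (2, j) = 0" "t (0, j) = 0" shows "t = (\<lambda>p. 0)"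
proof -
  have "t = mk (t (0, j)) (t (2, j))" by (rule deg_mk[OF assms(1,2)])
  also have "\<dots> = mk 0 0" unfolding assms(3,4) by (rule refl)
  also have "\<dots> = (\<lambda>p. 0)" by (rule mk_zero)
  finally show ?thesis .
qed

lemma hw_zero: assumes "t \<in> Tset" "hw t = 0" shows "t = (\<lambda>p. 0)"
proof (cases "nondeg t")
  case True then show ?thesis using hw_nondeg R'_pos assms by simp
next
  case False
  then have "t (2, j) = 0" "t (0, j) = 0" using hw_deg[OF False] R'_pos assms(2) by (auto split: if_splits)
  then show ?thesis using deg_zero[OF assms(1) False] by blast
qed

lemma inj_Wd: "inj_on (Wd m Nbar) Tset"
proof (rule inj_onI)
  fix t t' assume t: "t \<in> Tset" and t': "t' \<in> Tset" and eq: "Wd m Nbar t = Wd m Nbar t'"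
  have d: "Wd m Nbar (\<lambda>p. t p - t' p) = Wd m Nbar t - Wd m Nbar t'" by (rule Wd_diff)
  have z: "Wd m Nbar (\<lambda>p. t p - t' p) = 0" unfolding d eq by simp
  have h: "hw (\<lambda>p. t p - t' p) = 0" unfolding z by (simp add: hweight_def)
  have m: "(\<lambda>p. t p - t' p) \<in> Tset" using t t' by auto
  have "(\<lambda>p. t p - t' p) = (\<lambda>p. 0)" by (rule hw_zero[OF m h])
  then show "t = t'" by (auto simp: fun_eq_iff)
qed

end



lemma card_S6:
  assumes q4: "card (UNIV::'a::{field,finite} set) = 4"
  shows "card {(a::'a, c). (c = 0 \<and> a \<noteq> 0) \<or> (c \<noteq> 0 \<and> c + a = 0)} = 6"
proof -
  have eq: "{(a::'a, c). (c = 0 \<and> a \<noteq> 0) \<or> (c \<noteq> 0 \<and> c + a = 0)} =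
      (\<lambda>a. (a, 0)) ` (UNIV - {0}) \<union> (\<lambda>c. (- c, c)) ` (UNIV - {0})"
    by (auto simp: image_iff add_eq_0_iff)
  have c3: "card (UNIV - {0::'a}) = 3" using q4 by (simp add: card_Diff_singleton)
  have "card ((\<lambda>a::'a. (a, 0::'a)) ` (UNIV - {0})) = 3"
    using c3 by (subst card_image) (auto intro: inj_onI)
  moreover have "card ((\<lambda>c::'a. (- c, c)) ` (UNIV - {0})) = 3"
    using c3 by (subst card_image) (auto intro: inj_onI)
  moreover have "card ((\<lambda>a::'a. (a, 0::'a)) ` (UNIV - {0}) \<union> (\<lambda>c. (- c, c)) ` (UNIV - {0})) =
     card ((\<lambda>a::'a. (a, 0::'a)) ` (UNIV - {0})) + card ((\<lambda>c::'a. (- c, c)) ` (UNIV - {0}))"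
    by (rule card_Un_disjoint) auto
  ultimately show ?thesis unfolding eq by simp
qed

lemma card_S9:
  assumes q4: "card (UNIV::'a::{field,finite} set) = 4"
  shows "card {(a::'a, c). c \<noteq> 0 \<and> c + a \<noteq> 0} = 9"
proof -
  have eq: "{(a::'a, c). c \<noteq> 0 \<and> c + a \<noteq> 0} = (\<lambda>(c, a). (a, c)) ` (SIGMA c:UNIV - {0}. UNIV - {- c})"
    by (auto simp: image_iff add_eq_0_iff)
  have "card (SIGMA c:UNIV - {0::'a}. UNIV - {- c}) = (\<Sum>c\<in>UNIV - {0::'a}. card (UNIV - {- c}))"
    by (rule card_SigmaI) auto
  also have "\<dots> = (\<Sum>c\<in>UNIV - {0::'a}. 3)" using q4 by (simp add: card_Diff_singleton)
  also have "\<dots> = 9" using q4 by (simp add: card_Diff_singleton)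
  finally have "card (SIGMA c:UNIV - {0::'a}. UNIV - {- c}) = 9" .
  then show ?thesis unfolding eq by (subst card_image) (auto intro: inj_onI)
qed

context S13
begin

lemma card_Nbar: "card Nbar = 8 * R'"
proof -
  have "card NN = 3 * card Nbar" using card_scale[of "\<lambda>_. True"] by simp
  moreover have "card NN = card P" unfolding N2_eq by (rule card_image[OF inj_colmap])
  ultimately show ?thesis using card_P' by simp
qed

lemma hw_cases: assumes "t \<in> Tset" "t \<noteq> (\<lambda>p. 0)" shows "hw t \<in> {4 * R', 6 * R', 8 * R'}"
proof (cases "nondeg t")
  case True then show ?thesis using hw_nondeg by simp
next
  case False
  have "\<not> (t (2, j) = 0 \<and> t (0, j) = 0)" using deg_zero[OF assms(1) False] assms(2) by blast
  then show ?thesis using hw_deg[OF False] by (auto split: if_splits)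
qed

lemma Wd_nz: assumes t: "t \<in> Tset" shows "Wd m Nbar t \<noteq> 0 \<longleftrightarrow> t \<noteq> (\<lambda>p. 0)"
proof
  assume "Wd m Nbar t \<noteq> 0" then show "t \<noteq> (\<lambda>p. 0)" using Wd_zero[of m Nbar] by auto
next
  assume nz: "t \<noteq> (\<lambda>p. 0)"
  show "Wd m Nbar t \<noteq> 0"
  proof
    assume "Wd m Nbar t = 0"
    then have "Wd m Nbar t = Wd m Nbar (\<lambda>p. 0)" using Wd_zero[of m Nbar] by simp
    then have "t = (\<lambda>p. 0)" by (rule inj_onD[OF inj_Wd]) (use t in auto)
    then show False using nz by simp
  qed
qed

lemma freq_eq: "weight_freq Nbar (code_of m Nbar) w = card {t \<in> Tset. t \<noteq> (\<lambda>p. 0) \<and> hw t = w}"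
proof -
  have "{f \<in> code_of m Nbar. f \<noteq> 0 \<and> hweight Nbar f = w} = Wd m Nbar ` {t \<in> Tset. t \<noteq> (\<lambda>p. 0) \<and> hw t = w}"
    unfolding code_eq using Wd_nz by auto
  moreover have "inj_on (Wd m Nbar) {t \<in> Tset. t \<noteq> (\<lambda>p. 0) \<and> hw t = w}"
    by (rule inj_on_subset[OF inj_Wd]) auto
  ultimately show ?thesis unfolding weight_freq_def by (simp add: card_image)
qed

lemma W4_eq: "{t \<in> Tset. t \<noteq> (\<lambda>p. 0) \<and> hw t = 4 * R'} =
   (\<lambda>(a, c). mk a c) ` {(a, c). (c = 0 \<and> a \<noteq> 0) \<or> (c \<noteq> 0 \<and> c + a = 0)}"
proof
  show "{t \<in> Tset. t \<noteq> (\<lambda>p. 0) \<and> hw t = 4 * R'} \<subseteq> (\<lambda>(a, c). mk a c) ` {(a, c). (c = 0 \<and> a \<noteq> 0) \<or> (c \<noteq> 0 \<and> c + a = 0)}"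
  proof (rule subsetI)
    fix t assume "t \<in> {t \<in> Tset. t \<noteq> (\<lambda>p. 0) \<and> hw t = 4 * R'}"
    then have t: "t \<in> Tset" "t \<noteq> (\<lambda>p. 0)" "hw t = 4 * R'" by auto
    have nd: "\<not> nondeg t" using hw_nondeg t(3) R'_pos by auto
    have cnd: "(t (2, j) = 0 \<and> t (0, j) \<noteq> 0) \<or> (t (2, j) \<noteq> 0 \<and> t (2, j) + t (0, j) = 0)"
      using hw_deg[OF nd] t(3) R'_pos by (auto split: if_splits)
    show "t \<in> (\<lambda>(a, c). mk a c) ` {(a, c). (c = 0 \<and> a \<noteq> 0) \<or> (c \<noteq> 0 \<and> c + a = 0)}"
    proof (rule image_eqI[of _ _ "(t (0, j), t (2, j))"])
      show "t = (case (t (0, j), t (2, j)) of (a, c) \<Rightarrow> mk a c)" unfolding prod.case by (rule deg_mk[OF t(1) nd])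
      show "(t (0, j), t (2, j)) \<in> {(a, c). (c = 0 \<and> a \<noteq> 0) \<or> (c \<noteq> 0 \<and> c + a = 0)}" using cnd by simp
    qed
  qed
  show "(\<lambda>(a, c). mk a c) ` {(a, c). (c = 0 \<and> a \<noteq> 0) \<or> (c \<noteq> 0 \<and> c + a = 0)} \<subseteq> {t \<in> Tset. t \<noteq> (\<lambda>p. 0) \<and> hw t = 4 * R'}"
  proof (rule subsetI)
    fix x assume "x \<in> (\<lambda>(a, c). mk a c) ` {(a, c). (c = 0 \<and> a \<noteq> 0) \<or> (c \<noteq> 0 \<and> c + a = 0)}"
    then obtain a c where x: "x = mk a c" and ac: "(c = 0 \<and> a \<noteq> 0) \<or> (c \<noteq> 0 \<and> c + a = 0)" by auto
    have "mk a c \<noteq> (\<lambda>p. 0)"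
    proof
      assume "mk a c = (\<lambda>p. 0)"
      then have "mk a c (0, j) = 0" "mk a c (2, j) = 0" by simp_all
      then show False using ac by (auto simp: mk_apply)
    qed
    moreover have "hw (mk a c) = 4 * R'" using hw_deg[OF mk_deg] ac by (auto simp: mk_apply)
    ultimately show "x \<in> {t \<in> Tset. t \<noteq> (\<lambda>p. 0) \<and> hw t = 4 * R'}" using mk_Tset x by simp
  qed
qed

lemma W8_eq: "{t \<in> Tset. t \<noteq> (\<lambda>p. 0) \<and> hw t = 8 * R'} =
   (\<lambda>(a, c). mk a c) ` {(a, c). c \<noteq> 0 \<and> c + a \<noteq> 0}"
proof
  show "{t \<in> Tset. t \<noteq> (\<lambda>p. 0) \<and> hw t = 8 * R'} \<subseteq> (\<lambda>(a, c). mk a c) ` {(a, c). c \<noteq> 0 \<and> c + a \<noteq> 0}"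
  proof (rule subsetI)
    fix t assume "t \<in> {t \<in> Tset. t \<noteq> (\<lambda>p. 0) \<and> hw t = 8 * R'}"
    then have t: "t \<in> Tset" "t \<noteq> (\<lambda>p. 0)" "hw t = 8 * R'" by auto
    have nd: "\<not> nondeg t" using hw_nondeg t(3) R'_pos by auto
    have cnd: "t (2, j) \<noteq> 0 \<and> t (2, j) + t (0, j) \<noteq> 0"
      using hw_deg[OF nd] t(3) R'_pos by (auto split: if_splits)
    show "t \<in> (\<lambda>(a, c). mk a c) ` {(a, c). c \<noteq> 0 \<and> c + a \<noteq> 0}"
    proof (rule image_eqI[of _ _ "(t (0, j), t (2, j))"])
      show "t = (case (t (0, j), t (2, j)) of (a, c) \<Rightarrow> mk a c)" unfolding prod.case by (rule deg_mk[OF t(1) nd])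
      show "(t (0, j), t (2, j)) \<in> {(a, c). c \<noteq> 0 \<and> c + a \<noteq> 0}" using cnd by simp
    qed
  qed
  show "(\<lambda>(a, c). mk a c) ` {(a, c). c \<noteq> 0 \<and> c + a \<noteq> 0} \<subseteq> {t \<in> Tset. t \<noteq> (\<lambda>p. 0) \<and> hw t = 8 * R'}"
  proof (rule subsetI)
    fix x assume "x \<in> (\<lambda>(a, c). mk a c) ` {(a, c). c \<noteq> 0 \<and> c + a \<noteq> 0}"
    then obtain a c where x: "x = mk a c" and ac: "c \<noteq> 0 \<and> c + a \<noteq> 0" by auto
    have "mk a c \<noteq> (\<lambda>p. 0)"
    proof
      assume "mk a c = (\<lambda>p. 0)"
      then have "mk a c (0, j) = 0" "mk a c (2, j) = 0" by simp_all
      then show False using ac by (auto simp: mk_apply)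
    qed
    moreover have "hw (mk a c) = 8 * R'" using hw_deg[OF mk_deg] ac by (auto simp: mk_apply)
    ultimately show "x \<in> {t \<in> Tset. t \<noteq> (\<lambda>p. 0) \<and> hw t = 8 * R'}" using mk_Tset x by simp
  qed
qed

lemma inj_mk: "inj_on (\<lambda>(a, c). mk a c) X"
proof (rule inj_onI)
  fix p q assume "p \<in> X" "q \<in> X" and e: "(\<lambda>(a, c). mk a c) p = (\<lambda>(a, c). mk a c) q"
  obtain a c where p: "p = (a, c)" by (cases p)
  obtain a' c' where q: "q = (a', c')" by (cases q)
  have "mk a c = mk a' c'" using e p q by simp
  then have "mk a c (0, j) = mk a' c' (0, j)" "mk a c (2, j) = mk a' c' (2, j)" by simp_all
  then show "p = q" using p q by (simp add: mk_apply)
qed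

lemma freq4: "weight_freq Nbar (code_of m Nbar) (4 * R') = 6"
  unfolding freq_eq W4_eq by (simp add: card_image[OF inj_mk] card_S6[OF q4])

lemma freq8: "weight_freq Nbar (code_of m Nbar) (8 * R') = 9"
  unfolding freq_eq W8_eq by (simp add: card_image[OF inj_mk] card_S9[OF q4])

lemma card_TT: "card TT = 2 * m + card C"
proof -
  have fC: "finite C" using C finite_subset by blast
  have "card TT = card ({0::nat} \<times> {1..m} \<union> {1} \<times> C) + card ({2::nat} \<times> {1..m})"
    by (rule card_Un_disjoint) (use fC in auto)
  also have "card ({0::nat} \<times> {1..m} \<union> {1} \<times> C) = card ({0::nat} \<times> {1..m}) + card ({1::nat} \<times> C)"
    by (rule card_Un_disjoint) (use fC in auto)
  finally show ?thesis by (simp add: card_cartesian_product)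
qed

lemma finite_TT: "finite TT" using C finite_subset by blast

lemma card_Tset: "card Tset = 4 ^ (2 * m + card C)" "finite Tset"
  using card_zero_supp[OF finite_TT, where 'a='a] q4 card_TT by auto

lemma freq6: "weight_freq Nbar (code_of m Nbar) (6 * R') = 4 ^ (2 * m + card C) - 16"
proof -
  let ?W = "\<lambda>w. {t \<in> Tset. t \<noteq> (\<lambda>p. 0) \<and> hw t = w}"
  have fin: "finite (?W w)" for w using card_Tset(2) by auto
  have "Tset - {\<lambda>p. 0} = ?W (4 * R') \<union> ?W (6 * R') \<union> ?W (8 * R')"
    using hw_cases by auto
  moreover have "card (?W (4 * R') \<union> ?W (6 * R') \<union> ?W (8 * R')) = card (?W (4 * R')) + card (?W (6 * R')) + card (?W (8 * R'))"
    using R'_pos fin by (subst card_Un_disjoint, auto)+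
  moreover have "card (Tset - {\<lambda>p. 0}) = 4 ^ (2 * m + card C) - 1"
    using card_Tset by (subst card_Diff_singleton) auto
  ultimately have "4 ^ (2 * m + card C) - 1 = 6 + card (?W (6 * R')) + 9"
    using freq4 freq8 unfolding freq_eq by simp
  then show ?thesis unfolding freq_eq by simp
qed

end



context S13
begin

lemma A_ne: "A \<noteq> {}" using cardA m2 by auto

lemma weights: "{hweight Nbar f | f. f \<in> code_of m Nbar \<and> f \<noteq> 0} = {4 * R', 6 * R', 8 * R'}"
proof
  show "{hweight Nbar f | f. f \<in> code_of m Nbar \<and> f \<noteq> 0} \<subseteq> {4 * R', 6 * R', 8 * R'}"
  proof (rule subsetI)
    fix x assume "x \<in> {hweight Nbar f | f. f \<in> code_of m Nbar \<and> f \<noteq> 0}"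
    then obtain f where f: "x = hweight Nbar f" "f \<in> code_of m Nbar" "f \<noteq> 0" by blast
    then obtain t where t: "t \<in> Tset" "f = Wd m Nbar t" unfolding code_eq by blast
    have "t \<noteq> (\<lambda>p. 0)" using Wd_nz[OF t(1)] f(3) t(2) by simp
    then have "hw t \<in> {4 * R', 6 * R', 8 * R'}" by (rule hw_cases[OF t(1)])
    then show "x \<in> {4 * R', 6 * R', 8 * R'}" using f(1) t(2) by simp
  qed
next
  have w: "w \<in> {hweight Nbar f | f. f \<in> code_of m Nbar \<and> f \<noteq> 0}"
    if "t \<in> Tset" "t \<noteq> (\<lambda>p. 0)" "hw t = w" for t w
  proof -
    have "Wd m Nbar t \<in> code_of m Nbar" unfolding code_eq using that(1) by (rule imageI)
    moreover have "Wd m Nbar t \<noteq> 0" using Wd_nz[OF that(1)] that(2) by simp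
    ultimately show ?thesis unfolding mem_Collect_eq using that(3)
      by (intro exI[of _ "Wd m Nbar t"]) simp
  qed
  have "mk 1 0 \<noteq> (\<lambda>p. 0)"
  proof
    assume "mk 1 0 = (\<lambda>p. 0)" then have "mk 1 0 (0, j) = 0" by simp
    then show False by (simp add: mk_apply)
  qed
  moreover have "mk 0 1 \<noteq> (\<lambda>p. 0)"
  proof
    assume "mk 0 1 = (\<lambda>p. 0)" then have "mk 0 1 (2, j) = 0" by simp
    then show False by (simp add: mk_apply)
  qed
  moreover have "hw (mk 1 0) = 4 * R'" "hw (mk 0 1) = 8 * R'"
    using hw_deg[OF mk_deg] by (auto simp: mk_apply)
  ultimately have 1: "4 * R' \<in> {hweight Nbar f | f. f \<in> code_of m Nbar \<and> f \<noteq> 0}"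
     and 3: "8 * R' \<in> {hweight Nbar f | f. f \<in> code_of m Nbar \<and> f \<noteq> 0}"
    using w[OF mk_Tset] by simp_all
  obtain i0 where i0: "i0 \<in> A" using A_ne by auto
  let ?t = "\<lambda>p. if p = (0::nat, i0) then 1 else (0::'a)"
  have tT: "?t \<in> Tset" using i0 A by auto
  have tz: "?t \<noteq> (\<lambda>p. 0)" by (auto simp: fun_eq_iff)
  have "nondeg ?t" using i0 unfolding nondeg_def by auto
  then have "hw ?t = 6 * R'" by (rule hw_nondeg)
  then have 2: "6 * R' \<in> {hweight Nbar f | f. f \<in> code_of m Nbar \<and> f \<noteq> 0}"
    by (rule w[OF tT tz])
  show "{4 * R', 6 * R', 8 * R'} \<subseteq> {hweight Nbar f | f. f \<in> code_of m Nbar \<and> f \<noteq> 0}"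
    using 1 2 3 by blast
qed

lemma min_dist4: "min_dist Nbar (code_of m Nbar) = 4 * R'"
  unfolding min_dist_def weights using R'_pos by simp

lemma Wd_sumT: assumes "t \<in> Tset" shows "Wd m Nbar t = (\<Sum>p\<in>TT. fscale (t p) (row Nbar p))"
  unfolding Wd_sum
proof (rule sum.mono_neutral_right)
  show "finite ({..<3::nat} \<times> {1..m})" by simp
  show "TT \<subseteq> {..<3} \<times> {1..m}" by (rule TT_sub)
  show "\<forall>p\<in>{..<3} \<times> {1..m} - TT. fscale (t p) (row Nbar p) = 0"
  proof
    fix p assume "p \<in> {..<3} \<times> {1..m} - TT"
    then have "t p = 0" using assms by blast
    then show "fscale (t p) (row Nbar p) = 0" by (simp add: fscale_def fun_eq_iff)
  qed
qed

lemma row_delta: "p \<in> TT \<Longrightarrow> row Nbar p = Wd m Nbar (\<lambda>q. if q = p then 1 else 0)"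
  using TT_sub by (intro row_Wd) auto

lemma inj_row: "inj_on (row Nbar) TT"
proof (rule inj_onI)
  fix p q assume p: "p \<in> TT" and q: "q \<in> TT" and eq: "row Nbar p = row Nbar q"
  have "(\<lambda>r. if r = p then 1 else 0) = (\<lambda>r. if r = q then (1::'a) else 0)"
    using inj_onD[OF inj_Wd, of "\<lambda>r. if r = p then 1 else 0" "\<lambda>r. if r = q then 1 else 0"] eq p q
      row_delta[OF p] row_delta[OF q] by auto
  then show "p = q" by (metis one_neq_zero)
qed

lemma dim: "code_dim (code_of m Nbar) = 2 * m + card C"
  unfolding code_dim_def
proof (rule vector_space.dim_unique[OF vs_fscale, where B = "row Nbar ` TT"])
  show "row Nbar ` TT \<subseteq> code_of m Nbar"
    unfolding code_eq using row_delta by auto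
  show "code_of m Nbar \<subseteq> module.span fscale (row Nbar ` TT)"
  proof
    fix f assume "f \<in> code_of m Nbar"
    then obtain t where t: "t \<in> Tset" "f = Wd m Nbar t" unfolding code_eq by auto
    show "f \<in> module.span fscale (row Nbar ` TT)"
      unfolding t(2) Wd_sumT[OF t(1)]
      by (intro module.span_sum[OF mod_fscale] module.span_scale[OF mod_fscale] module.span_base[OF mod_fscale]) auto
  qed
  show "card (row Nbar ` TT) = 2 * m + card C"
    using card_image[OF inj_row] card_TT by simp
  show "\<not> module.dependent fscale (row Nbar ` TT)"
  proof
    assume dep: "module.dependent fscale (row Nbar ` TT)"
    have fB: "finite (row Nbar ` TT)" using finite_TT by simp
    obtain u where u1: "\<exists>v\<in>row Nbar ` TT. u v \<noteq> 0" and u2: "(\<Sum>v\<in>row Nbar ` TT. fscale (u v) v) = 0"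
      using dep unfolding module.dependent_finite[OF mod_fscale fB] by blast
    let ?t = "\<lambda>p. if p \<in> TT then u (row Nbar p) else 0"
    have tT: "?t \<in> Tset" by auto
    have "(\<Sum>v\<in>row Nbar ` TT. fscale (u v) v) = (\<Sum>p\<in>TT. fscale (u (row Nbar p)) (row Nbar p))"
      by (rule sum.reindex[OF inj_row, unfolded comp_def])
    also have "\<dots> = (\<Sum>p\<in>TT. fscale (?t p) (row Nbar p))" by (rule sum.cong) auto
    also have "\<dots> = Wd m Nbar ?t" by (rule Wd_sumT[OF tT, symmetric])
    finally have "Wd m Nbar ?t = Wd m Nbar (\<lambda>p. 0)" using u2 Wd_zero[of m Nbar] by simp
    then have e: "?t = (\<lambda>p. 0)" by (rule inj_onD[OF inj_Wd]) (use tT in auto)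
    obtain v where v: "v \<in> row Nbar ` TT" "u v \<noteq> 0" using u1 by blast
    then obtain p where p: "p \<in> TT" "v = row Nbar p" by blast
    have "u (row Nbar p) = 0" using fun_cong[OF e, of p] p(1) by simp
    then show False using v p by simp
  qed
qed

lemma Wd_in_code: "Wd m Nbar t \<in> code_of m Nbar"
  unfolding code_eq by (subst Wd_trunc) (rule imageI, auto)

lemma projective: "projective Nbar (code_of m Nbar)"
  unfolding projective_def
proof (intro ballI impI)
  fix y assume y: "y \<in> dual_code Nbar (code_of m Nbar)" and ynz: "y \<noteq> 0"
  have yout: "\<And>c. c \<notin> Nbar \<Longrightarrow> y c = 0" using y by (auto simp: dual_code_def)
  let ?Y = "{c \<in> Nbar. y c \<noteq> 0}"
  have finY: "finite ?Y" using finite_Nbar by auto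
  have orth: "(\<Sum>c\<in>?Y. y c * coord k i c) = 0" if "k < 3" "i \<in> {1..m}" for k i
  proof -
    have "row Nbar (k, i) = Wd m Nbar (\<lambda>q. if q = (k, i) then 1 else 0)" by (rule row_Wd) (use that in auto)
    then have "row Nbar (k, i) \<in> code_of m Nbar" using Wd_in_code by simp
    then have "(\<Sum>c\<in>Nbar. y c * row Nbar (k, i) c) = 0" using y by (auto simp: dual_code_def)
    then have "(\<Sum>c\<in>Nbar. y c * coord k i c) = 0" by (simp add: row_def)
    moreover have "(\<Sum>c\<in>Nbar. y c * coord k i c) = (\<Sum>c\<in>?Y. y c * coord k i c)"
      by (rule sum.mono_neutral_right) (use finite_Nbar in auto)
    ultimately show ?thesis by simp
  qed
  have Yne: "?Y \<noteq> {}"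
  proof
    assume "?Y = {}"
    then have yz: "y c = 0" for c
      using yout[of c] by (cases "c \<in> Nbar") blast+
    have "y = 0" by (rule ext) (simp add: yz)
    then show False using ynz by simp
  qed
  show "hweight Nbar y \<ge> 3"
  proof (rule ccontr)
    assume "\<not> hweight Nbar y \<ge> 3"
    then have cY: "card ?Y \<le> 2" by (simp add: hweight_def)
    have "card ?Y \<noteq> 0" using Yne finY by simp
    then have "card ?Y = 1 \<or> card ?Y = 2" using cY by linarith
    then show False
    proof
      assume "card ?Y = 1"
      then obtain c1 where c1: "?Y = {c1}" by (rule card_1_singletonE)
      have c1N: "c1 \<in> NN" "y c1 \<noteq> 0" using c1 Nbar_sub by auto
      have "y c1 * coord 2 j c1 = 0" using orth[of 2 j] c1 jm by simp
      then have "snd (snd c1) j = 0" using c1N(2) by (simp add: coord_def split: prod.splits)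
      then show False using N2_third[OF c1N(1)] by simp
    next
      assume "card ?Y = 2"
      then obtain c1 c2 where c12: "?Y = {c1, c2}" "c1 \<noteq> c2" unfolding card_2_iff by blast
      have c1: "c1 \<in> Nbar" "y c1 \<noteq> 0" and c2: "c2 \<in> Nbar" "y c2 \<noteq> 0" using c12 by auto
      have c1N: "c1 \<in> NN" and c2N: "c2 \<in> NN" using c1 c2 Nbar_sub by auto
      define \<beta> where "\<beta> = - (y c2 / y c1)"
      have \<beta>: "\<beta> \<noteq> 0" using c1 c2 by (simp add: \<beta>_def)
      have rel: "coord k i c1 = \<beta> * coord k i c2" if "k < 3" "i \<in> {1..m}" for k i
      proof -
        have "y c1 * coord k i c1 + y c2 * coord k i c2 = 0" using orth[OF that] c12 by simp
        then have "y c1 * coord k i c1 = - (y c2 * coord k i c2)" by (simp add: eq_neg_iff_add_eq_0)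
        then show ?thesis using c1(2) unfolding \<beta>_def by (simp add: field_simps)
      qed
      have out: "fst c i = 0 \<and> fst (snd c) i = 0 \<and> snd (snd c) i = 0" if "c \<in> NN" "i \<notin> {1..m}" for c i
        using N2_vecs[OF that(1)] that(2) by (auto simp: vecs_def Delta_def)
      obtain u1 v1 w1 where e1: "c1 = (u1, v1, w1)" by (cases c1) auto
      obtain u2 v2 w2 where e2: "c2 = (u2, v2, w2)" by (cases c2) auto
      have uu: "u1 = (\<lambda>i. \<beta> * u2 i)"
      proof
        fix i show "u1 i = \<beta> * u2 i" using rel[of 0 i] out[OF c1N, of i] out[OF c2N, of i] e1 e2
          by (cases "i \<in> {1..m}") (auto simp: coord_def)
      qed
      have vv: "v1 = (\<lambda>i. \<beta> * v2 i)"
      proof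
        fix i show "v1 i = \<beta> * v2 i" using rel[of 1 i] out[OF c1N, of i] out[OF c2N, of i] e1 e2
          by (cases "i \<in> {1..m}") (auto simp: coord_def)
      qed
      have ww: "w1 = (\<lambda>i. \<beta> * w2 i)"
      proof
        fix i show "w1 i = \<beta> * w2 i" using rel[of 2 i] out[OF c1N, of i] out[OF c2N, of i] e1 e2
          by (cases "i \<in> {1..m}") (auto simp: coord_def)
      qed
      have "c1 = smult_col \<beta> c2" unfolding e1 e2 smult_col_simp uu vv ww by (rule refl)
      then have "c1 = c2" using Nbar_unique[OF c2(1) c1(1) _ \<beta>] by simp
      then show False using c12 by simp
    qed
  qed
qed

end

theorem mainTheorem13:
  fixes m :: nat and A B C :: "nat set"
    and Nbar :: "('a::{field,finite}) col set"
    and \<theta> :: nat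
  assumes q4: "card (UNIV :: 'a set) = 4"
    and m2: "m \<ge> 2"
    and A: "A \<noteq> {}" "A \<subseteq> {1..m}"
    and B: "B \<noteq> {}" "B \<subseteq> {1..m}"
    and C: "C \<noteq> {}" "C \<subseteq> {1..m}"
    and BA: "B = A"
    and cardA: "card A = m - 1"
    and Nbar: "is_projection_set (N2 m A B C) Nbar"
    and theta: "\<theta> = 2 ^ (4 * m + 2 * card C - 3)"
  shows "projective Nbar (code_of m Nbar)
    \<and> card Nbar = \<theta>
    \<and> code_dim (code_of m Nbar) = 2 * m + card C
    \<and> min_dist Nbar (code_of m Nbar) = \<theta> div 2
    \<and> {hweight Nbar f | f. f \<in> code_of m Nbar \<and> f \<noteq> 0} = {\<theta> div 2, 3 * \<theta> div 4, \<theta>}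
    \<and> card {\<theta> div 2, 3 * \<theta> div 4, \<theta>} = 3
    \<and> weight_freq Nbar (code_of m Nbar) (\<theta> div 2) = 6
    \<and> weight_freq Nbar (code_of m Nbar) (3 * \<theta> div 4) = 4 ^ (2 * m + card C) - 16
    \<and> weight_freq Nbar (code_of m Nbar) \<theta> = 9
    \<and> 4 * (\<theta> div 2 + 3 * \<theta> div 4 + \<theta>) = 9 * \<theta>"
proof -
  have fin: "finite {1..m}" by simp
  have "card ({1..m} - A) = 1" using card_Diff_subset[OF finite_subset[OF A(2) fin] A(2)] cardA m2 by simp
  then obtain j where j: "{1..m} - A = {j}" by (rule card_1_singletonE)
  interpret S: S13 m A C Nbar j
    using q4 m2 A C j Nbar BA by unfold_locales auto
  have e: "4 * m + 2 * card C - 3 = 3 + 2 * (m - 2) + 2 * (m - 1) + 2 * card C" using m2 by simp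
  have "\<theta> = 2 ^ 3 * (2 ^ 2) ^ (m - 2) * (2 ^ 2) ^ (m - 1) * (2 ^ 2) ^ card C"
    unfolding theta e by (simp add: power_add power_mult)
  then have th: "\<theta> = 8 * S.R'" by (simp add: S.R'_def)
  have x1: "8 * S.R' div 2 = 4 * S.R'" and x2: "3 * (8 * S.R') div 4 = 6 * S.R'" by simp_all
  have x3: "card {4 * S.R', 6 * S.R', 8 * S.R'} = 3" using S.R'_pos by simp
  show ?thesis
    unfolding th x1 x2 using S.projective S.card_Nbar S.dim S.min_dist4 S.weights x3 S.freq4 S.freq6 S.freq8
    by simp
qed

end
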